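(* Let $f,g\in\mathbb{C}(z)$ be rational functions of the same degree $d>1$, and let $C\subset\mathbb{P}^1\times\mathbb{P}^1$ be a curve which projects dominantly onto both coordinates. If $C$ is preperiodic under the endomorphism $\Phi(x,y)=(f(x),g(y))$ of $\mathbb{P}^1\times\mathbb{P}^1$, then $C$ contains infinitely many points preperiodic under $\Phi$.
   Context: A curve $Y$ is preperiodic under $\Phi$ if $\Phi^m(Y)=\Phi^n(Y)$ for some integers $n>m\ge0$; a point is preperiodic if its forward orbit is finite. *)

theory Defs
  imports Complex_Main "HOL-Computational_Algebra.Computational_Algebra"
begin

text \<open>The Riemann sphere P^1(C): None is the point at infinity.\<close>
type_synonym P1 = "complex option"

text \<open>A rational function p/q in lowest terms (q nonzero, p q coprime).\<close>
definition is_rat_fun :: "complex poly \<Rightarrow> complex poly \<Rightarrow> bool" where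
  "is_rat_fun p q \<longleftrightarrow> q \<noteq> 0 \<and> coprime p q"

definition rat_deg :: "complex poly \<Rightarrow> complex poly \<Rightarrow> nat" where
  "rat_deg p q = max (degree p) (degree q)"

definition rat_map :: "complex poly \<Rightarrow> complex poly \<Rightarrow> P1 \<Rightarrow> P1" where
  "rat_map p q w = (case w of
      Some z \<Rightarrow> (if poly q z \<noteq> 0 then Some (poly p z / poly q z) else None)
    | None \<Rightarrow> (if degree p > degree q then None
               else if degree p = degree q then Some (lead_coeff p / lead_coeff q)
               else Some 0))"

text \<open>Bivariate polynomials P(x,y) as polynomials in y with coefficients in C[x].
  x-degree of P:\<close>
definition degx :: "complex poly poly \<Rightarrow> nat" where
  "degx P = (MAX j \<in> {..degree P}. degree (coeff P j))"

text \<open>Zero locus in P^1 x P^1 of the bihomogenisation of P (bidegree (degx P, degree P)),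
  i.e. the closure in P^1 x P^1 of the affine curve P = 0.\<close>
definition curve_zero :: "complex poly poly \<Rightarrow> (P1 \<times> P1) set" where
  "curve_zero P = {(u, v). (case (u, v) of
      (Some a, Some b) \<Rightarrow> poly (map_poly (\<lambda>c. poly c a) P) b = 0
    | (None, Some b) \<Rightarrow> poly (map_poly (\<lambda>c. coeff c (degx P)) P) b = 0
    | (Some a, None) \<Rightarrow> poly (lead_coeff P) a = 0
    | (None, None) \<Rightarrow> coeff (lead_coeff P) (degx P) = 0)}"

text \<open>An (irreducible) curve in P^1 x P^1 not equal to a line at infinity.\<close>
definition is_curve :: "(P1 \<times> P1) set \<Rightarrow> bool" where
  "is_curve C \<longleftrightarrow> (\<exists>P. irreducible P \<and> C = curve_zero P)"

text \<open>Dominant projection onto P^1: image Zariski dense, i.e. infinite.\<close>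
definition dominant_fst :: "(P1 \<times> P1) set \<Rightarrow> bool" where
  "dominant_fst C \<longleftrightarrow> infinite (fst ` C)"
definition dominant_snd :: "(P1 \<times> P1) set \<Rightarrow> bool" where
  "dominant_snd C \<longleftrightarrow> infinite (snd ` C)"

definition preperiodic_set :: "('a \<Rightarrow> 'a) \<Rightarrow> 'a set \<Rightarrow> bool" where
  "preperiodic_set F Y \<longleftrightarrow> (\<exists>m n. m < n \<and> (F ^^ m) ` Y = (F ^^ n) ` Y)"

definition preperiodic_pt :: "('a \<Rightarrow> 'a) \<Rightarrow> 'a \<Rightarrow> bool" where
  "preperiodic_pt F z \<longleftrightarrow> finite (range (\<lambda>k. (F ^^ k) z))"

end

theory Submission
  imports Defs "HOL-Computational_Algebra.Field_as_Ring"
begin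


lemma deg_sum_order:
  fixes p :: "complex poly" assumes "p \<noteq> 0"
  shows "degree p = (\<Sum>z|poly p z = 0. order z p)"
proof -
  have "degree p = degree (smult (lead_coeff p) (\<Prod>z|poly p z = 0. [:-z, 1:] ^ order z p))"
    by (subst complex_poly_decompose) simp
  also have "\<dots> = (\<Sum>z|poly p z = 0. order z p)"
    using assms poly_roots_finite[OF assms]
    by (simp add: degree_prod_sum_eq degree_power_eq)
  finally show ?thesis .
qed

lemma complex_root_exists:
  fixes p :: "complex poly" assumes "degree p \<ge> 1"
  shows "\<exists>z. poly p z = 0"
proof (rule ccontr)
  assume "\<not> ?thesis"
  hence "{z. poly p z = 0} = {}" by auto
  moreover have "p \<noteq> 0" using assms by auto
  ultimately show False using deg_sum_order[of p] assms by simp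
qed

lemma single_root_form:
  fixes p :: "complex poly" assumes "p \<noteq> 0" and "\<And>z. poly p z = 0 \<Longrightarrow> z = a"
  shows "p = smult (lead_coeff p) ([:-a,1:] ^ degree p)"
proof (cases "poly p a = 0")
  case True
  hence R: "{z. poly p z = 0} = {a}" using assms(2) by blast
  have "p = smult (lead_coeff p) (\<Prod>z|poly p z = 0. [:-z, 1:] ^ order z p)"
    by (rule complex_poly_decompose[symmetric])
  also have "(\<Prod>z|poly p z = 0. [:-z, 1:] ^ order z p) = [:-a,1:] ^ order a p"
    unfolding R by simp
  also have "order a p = degree p" using deg_sum_order[OF assms(1)] unfolding R by simp
  finally show ?thesis .
next
  case False
  hence R: "{z. poly p z = 0} = {}" using assms(2) by blast
  have "degree p = 0" using deg_sum_order[OF assms(1)] unfolding R by simp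
  then obtain c where "p = [:c:]" by (rule degree_eq_zeroE)
  thus ?thesis by simp
qed



lemma rm_Some_nz: "poly q a \<noteq> 0 \<Longrightarrow> rat_map p q (Some a) = Some (poly p a / poly q a)"
  by (simp add: rat_map_def)
lemma rm_Some_z: "poly q a = 0 \<Longrightarrow> rat_map p q (Some a) = None"
  by (simp add: rat_map_def)

lemma rf_common_root:
  fixes p q :: "complex poly"
  assumes "is_rat_fun p q" "poly q a = 0" shows "poly p a \<noteq> 0"
proof
  assume "poly p a = 0"
  hence d1: "[:-a,1:] dvd p" by (simp add: dvd_iff_poly_eq_0)
  have d2: "[:-a,1:] dvd q" using assms(2) by (simp add: dvd_iff_poly_eq_0)
  have cp: "coprime p q" using assms(1) unfolding is_rat_fun_def by blast
  have "is_unit [:-a,1:]" by (rule coprime_common_divisor[OF cp d1 d2])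
  moreover have "degree [:-a,1:] = 1" by simp
  ultimately show False by (simp add: is_unit_iff_degree)
qed

lemma rf_h_nz:
  fixes p q :: "complex poly"
  assumes "is_rat_fun p q" "rat_deg p q \<ge> 1" shows "p - smult c q \<noteq> 0"
proof
  assume "p - smult c q = 0"
  hence pe: "p = smult c q" by simp
  have "coprime p q" "q \<noteq> 0" using assms(1) by (auto simp: is_rat_fun_def)
  moreover have "q dvd p" using pe by (metis dvd_smult dvd_refl)
  ultimately have "is_unit q" by (meson coprime_common_divisor dvd_refl)
  hence "degree q = 0" using \<open>q \<noteq> 0\<close> by (simp add: is_unit_iff_degree)
  hence "degree p = 0" using pe by simp
  thus False using assms(2) \<open>degree q = 0\<close> by (simp add: rat_deg_def)
qed

lemma rf_preim_Some:
  fixes p q :: "complex poly"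
  assumes "is_rat_fun p q"
  shows "rat_map p q (Some b) = Some c \<longleftrightarrow> poly (p - smult c q) b = 0"
proof (cases "poly q b = 0")
  case True thus ?thesis using rf_common_root[OF assms True] by (simp add: rm_Some_z)
next
  case False thus ?thesis by (auto simp: rm_Some_nz field_simps)
qed

lemma rf_preim_None: "rat_map p q (Some b) = None \<longleftrightarrow> poly q b = 0"
  by (simp add: rat_map_def)

lemma rf_deg_h:
  fixes p q :: "complex poly"
  assumes "is_rat_fun p q" "rat_map p q None \<noteq> Some c"
  shows "degree (p - smult c q) = rat_deg p q"
proof -
  let ?h = "p - smult c q"
  have q0: "q \<noteq> 0" using assms by (simp add: is_rat_fun_def)
  have le: "degree ?h \<le> rat_deg p q"
    by (rule degree_diff_le) (auto simp: rat_deg_def)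
  consider "degree p > degree q" | "degree p < degree q" | "degree p = degree q" by linarith
  then show ?thesis
  proof cases
    case 1
    hence "coeff q (degree p) = 0" by (simp add: coeff_eq_0)
    hence "coeff ?h (degree p) = lead_coeff p" by simp
    moreover have "lead_coeff p \<noteq> 0" using 1 by auto
    ultimately have "coeff ?h (degree p) \<noteq> 0" by argo
    hence "degree p \<le> degree ?h" by (rule le_degree)
    thus ?thesis using le 1 by (simp add: rat_deg_def)
  next
    case 2
    hence "c \<noteq> 0" using assms(2) by (auto simp: rat_map_def)
    hence "coeff ?h (degree q) = - c * lead_coeff q" using 2 by (simp add: coeff_eq_0)
    moreover have "lead_coeff q \<noteq> 0" using q0 by simp
    ultimately have "degree q \<le> degree ?h" using \<open>c \<noteq> 0\<close> by (intro le_degree) simp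
    thus ?thesis using le 2 by (simp add: rat_deg_def)
  next
    case 3
    have lq: "lead_coeff q \<noteq> 0" using q0 by simp
    have "c \<noteq> lead_coeff p / lead_coeff q" using assms(2) 3 by (auto simp: rat_map_def)
    hence "lead_coeff p - c * lead_coeff q \<noteq> 0" using lq by (auto simp: field_simps)
    hence "coeff ?h (degree q) \<noteq> 0" using 3 by simp
    hence "degree q \<le> degree ?h" by (rule le_degree)
    thus ?thesis using le 3 by (simp add: rat_deg_def)
  qed
qed

lemma rf_deg_q:
  fixes p q :: "complex poly"
  assumes "rat_map p q None \<noteq> None" shows "degree q = rat_deg p q"
  using assms by (auto simp: rat_map_def rat_deg_def split: if_splits)

lemma rf_surj:
  fixes p q :: "complex poly"
  assumes "is_rat_fun p q" "rat_deg p q \<ge> 1" shows "\<exists>t. rat_map p q t = s"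
proof (cases s)
  case None
  show ?thesis
  proof (cases "rat_map p q None = None")
    case True thus ?thesis using None by blast
  next
    case False
    hence "degree q \<ge> 1" using rf_deg_q[OF False] assms by simp
    then obtain b where "poly q b = 0" using complex_root_exists by blast
    thus ?thesis using None rf_preim_None by blast
  qed
next
  case (Some c)
  show ?thesis
  proof (cases "rat_map p q None = Some c")
    case True thus ?thesis using Some by blast
  next
    case False
    hence "degree (p - smult c q) \<ge> 1" using rf_deg_h[OF assms(1) False] assms by simp
    then obtain b where "poly (p - smult c q) b = 0" using complex_root_exists by blast
    thus ?thesis using Some rf_preim_Some[OF assms(1)] by blast
  qed
qed



lemma fin_sub_opt: "finite {b. poly R b = 0} \<Longrightarrow> X \<subseteq> insert None (Some ` {b. poly R b = 0}) \<Longrightarrow> finite X"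
  by (meson finite_imageI finite_insert finite_subset)

lemma rf_preim_finite:
  fixes p q :: "complex poly"
  assumes "is_rat_fun p q" "rat_deg p q \<ge> 1" shows "finite {t. rat_map p q t = s}"
proof (cases s)
  case None
  have q0: "q \<noteq> 0" using assms(1) unfolding is_rat_fun_def by blast
  show ?thesis
  proof (rule fin_sub_opt[OF poly_roots_finite[OF q0]], rule subsetI)
    fix t assume t: "t \<in> {t. rat_map p q t = s}"
    show "t \<in> insert None (Some ` {b. poly q b = 0})"
    proof (cases t)
      case (Some b)
      hence "poly q b = 0" using t None rf_preim_None[of p q b] by simp
      thus ?thesis using Some by blast
    qed simp
  qed
next
  case (Some c)
  have h0: "p - smult c q \<noteq> 0" by (rule rf_h_nz[OF assms])
  show ?thesis
  proof (rule fin_sub_opt[OF poly_roots_finite[OF h0]], rule subsetI)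
    fix t assume t: "t \<in> {t. rat_map p q t = s}"
    show "t \<in> insert None (Some ` {b. poly (p - smult c q) b = 0})"
    proof (cases t)
      case (Some b)
      hence "poly (p - smult c q) b = 0" using t \<open>s = Some c\<close> rf_preim_Some[OF assms(1), of b c] by simp
      thus ?thesis using Some by blast
    qed simp
  qed
qed

lemma dvd_pow_pderiv:
  fixes a k :: complex
  shows "[:-a,1:]^(n-1) dvd smult k ([:-a,1:]^n) \<and> [:-a,1:]^(n-1) dvd pderiv (smult k ([:-a,1:]^n))"
proof (cases n)
  case 0 thus ?thesis by simp
next
  case (Suc m)
  have "pderiv (smult k ([:-a,1:]^n)) = smult k (smult (of_nat (Suc m)) ([:-a,1:] ^ m) * pderiv [:-a,1:])"
    using Suc by (simp only: pderiv_smult pderiv_power_Suc)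
  moreover have "[:-a,1:]^n = [:-a,1:]^m * [:-a,1:]" using Suc by simp
  ultimately show ?thesis using Suc
    by (metis diff_Suc_1 dvd_mult2 dvd_refl dvd_smult mult_smult_left)
qed

lemma unique_preim_form:
  fixes p q :: "complex poly"
  assumes rf: "is_rat_fun p q" and e1: "rat_deg p q \<ge> 1"
    and s: "rat_map p q (Some a) = s" and u: "\<And>t. rat_map p q t = s \<Longrightarrow> t = Some a"
  shows "[:-a,1:]^(rat_deg p q - 1) dvd (pderiv p * q - p * pderiv q)"
proof (cases s)
  case None
  have q0: "q \<noteq> 0" using rf by (simp add: is_rat_fun_def)
  have "rat_map p q None \<noteq> None" using u None by blast
  hence dq: "degree q = rat_deg p q" by (rule rf_deg_q)
  have "\<And>z. poly q z = 0 \<Longrightarrow> z = a" using u None rf_preim_None by blast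
  hence qf: "q = smult (lead_coeff q) ([:-a,1:] ^ rat_deg p q)"
    using single_root_form[OF q0] dq by metis
  from dvd_pow_pderiv[of a "rat_deg p q" "lead_coeff q"] qf
  have "[:-a,1:]^(rat_deg p q - 1) dvd q" "[:-a,1:]^(rat_deg p q - 1) dvd pderiv q" by metis+
  thus ?thesis by (simp add: dvd_diff dvd_mult)
next
  case (Some c)
  let ?h = "p - smult c q"
  have h0: "?h \<noteq> 0" using rf_h_nz rf e1 by blast
  have "rat_map p q None \<noteq> Some c" using u Some by blast
  hence dh: "degree ?h = rat_deg p q" by (rule rf_deg_h[OF rf])
  have "\<And>z. poly ?h z = 0 \<Longrightarrow> z = a" using u Some rf_preim_Some[OF rf] by blast
  hence hf: "?h = smult (lead_coeff ?h) ([:-a,1:] ^ rat_deg p q)"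
    using single_root_form[OF h0] dh by metis
  from dvd_pow_pderiv[of a "rat_deg p q" "lead_coeff ?h"] hf
  have d1: "[:-a,1:]^(rat_deg p q - 1) dvd ?h" "[:-a,1:]^(rat_deg p q - 1) dvd pderiv ?h" by metis+
  have "pderiv p * q - p * pderiv q = pderiv ?h * q - ?h * pderiv q"
    by (simp add: pderiv_diff pderiv_smult algebra_simps)
  thus ?thesis using d1 by (simp add: dvd_diff dvd_mult2)
qed

lemma unique_preim_form_fix:
  fixes p q :: "complex poly"
  assumes rf: "is_rat_fun p q" and e1: "rat_deg p q \<ge> 1"
    and s: "rat_map p q (Some a) = Some a" and u: "\<And>t. rat_map p q t = Some a \<Longrightarrow> t = Some a"
  shows "p - smult a q = smult (lead_coeff (p - smult a q)) ([:-a,1:] ^ rat_deg p q)"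
proof -
  let ?h = "p - smult a q"
  have h0: "?h \<noteq> 0" using rf_h_nz rf e1 by blast
  have "rat_map p q None \<noteq> Some a" using u by blast
  hence dh: "degree ?h = rat_deg p q" by (rule rf_deg_h[OF rf])
  have "\<And>z. poly ?h z = 0 \<Longrightarrow> z = a" using u rf_preim_Some[OF rf] by blast
  thus ?thesis using single_root_form[OF h0] dh by metis
qed

lemma deg_wr:
  fixes A B :: "complex poly"
  shows "degree (pderiv A * B - A * pderiv B) \<le> degree A + degree B - 1"
proof -
  have 1: "degree (pderiv A * B) \<le> degree A + degree B - 1"
  proof (cases "pderiv A = 0")
    case False
    hence "degree A \<ge> 1" by (metis pderiv_eq_0_iff less_one not_less)
    thus ?thesis using degree_mult_le[of "pderiv A" B] by (simp add: degree_pderiv)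
  qed simp
  have 2: "degree (A * pderiv B) \<le> degree A + degree B - 1"
  proof (cases "pderiv B = 0")
    case False
    hence "degree B \<ge> 1" by (metis pderiv_eq_0_iff less_one not_less)
    thus ?thesis using degree_mult_le[of A "pderiv B"] by (simp add: degree_pderiv)
  qed simp
  show ?thesis using 1 2 by (rule degree_diff_le)
qed

lemma W_deg:
  fixes p q :: "complex poly"
  assumes rf: "is_rat_fun p q" and e1: "rat_deg p q \<ge> 1"
  shows "degree (pderiv p * q - p * pderiv q) \<le> 2 * rat_deg p q - 2"
proof (cases "degree p = degree q")
  case True
  have q0: "q \<noteq> 0" using rf by (simp add: is_rat_fun_def)
  define c where "c = lead_coeff p / lead_coeff q"
  let ?h = "p - smult c q"
  have "coeff ?h (degree q) = 0" using True q0 by (simp add: c_def)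
  moreover have "degree ?h \<le> degree q" using True by (intro degree_diff_le) auto
  ultimately have "degree ?h < degree q \<or> ?h = 0"
    by (metis le_neq_implies_less leading_coeff_0_iff)
  hence dh: "degree ?h \<le> rat_deg p q - 1" using True e1 by (auto simp: rat_deg_def)
  have "pderiv p * q - p * pderiv q = pderiv ?h * q - ?h * pderiv q"
    by (simp add: pderiv_diff pderiv_smult algebra_simps)
  also have "degree \<dots> \<le> degree ?h + degree q - 1" by (rule deg_wr)
  also have "\<dots> \<le> 2 * rat_deg p q - 2" using dh True by (simp add: rat_deg_def)
  finally show ?thesis .
next
  case False
  have "degree (pderiv p * q - p * pderiv q) \<le> degree p + degree q - 1" by (rule deg_wr)
  also have "\<dots> \<le> 2 * rat_deg p q - 2" using False by (simp add: rat_deg_def)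
  finally show ?thesis .
qed

lemma W_nz:
  fixes p q :: "complex poly"
  assumes rf: "is_rat_fun p q" and e1: "rat_deg p q \<ge> 1"
  shows "pderiv p * q - p * pderiv q \<noteq> 0"
proof
  assume "pderiv p * q - p * pderiv q = 0"
  hence eq: "pderiv p * q = p * pderiv q" by simp
  have cp0: "coprime p q" and q0: "q \<noteq> 0" using rf unfolding is_rat_fun_def by blast+
  have cp: "coprime q p" using cp0 by (simp add: coprime_commute)
  have "q dvd pderiv p * q" by (rule dvd_triv_right)
  hence "q dvd p * pderiv q" by (simp only: eq)
  hence qd: "q dvd pderiv q" using coprime_dvd_mult_right_iff[of q p "pderiv q"] cp by simp
  have pq0: "pderiv q = 0"
  proof (rule ccontr)
    assume nz: "pderiv q \<noteq> 0"
    have "degree q \<le> degree (pderiv q)" by (rule dvd_imp_degree_le[OF qd nz])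
    hence "degree q = 0" by (simp add: degree_pderiv)
    hence "pderiv q = 0" by (simp add: pderiv_eq_0_iff)
    thus False using nz by contradiction
  qed
  hence dq: "degree q = 0" by (simp add: pderiv_eq_0_iff)
  have "pderiv p * q = 0" using eq pq0 by simp
  hence "pderiv p = 0" using q0 by simp
  hence "degree p = 0" by (simp add: pderiv_eq_0_iff)
  thus False using dq e1 by (simp add: rat_deg_def)
qed

lemma count_roots_bound:
  fixes W :: "complex poly"
  assumes W0: "W \<noteq> 0" and fin: "finite A" and dv: "\<And>a. a \<in> A \<Longrightarrow> [:-a,1:]^n dvd W" and n1: "n \<ge> 1"
  shows "n * card A \<le> degree W"
proof -
  have ord: "n \<le> order a W" if "a \<in> A" for a using dv[OF that] W0 by (simp add: order_divides)
  have sub: "A \<subseteq> {z. poly W z = 0}"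
  proof
    fix a assume "a \<in> A"
    hence "order a W \<noteq> 0" using ord n1 by fastforce
    thus "a \<in> {z. poly W z = 0}" by (simp add: order_root)
  qed
  have "n * card A = (\<Sum>a\<in>A. n)" by simp
  also have "\<dots> \<le> (\<Sum>a\<in>A. order a W)" by (intro sum_mono ord)
  also have "\<dots> \<le> (\<Sum>z|poly W z = 0. order z W)"
    by (intro sum_mono2 poly_roots_finite W0 sub) auto
  also have "\<dots> = degree W" using deg_sum_order[OF W0] by simp
  finally show ?thesis .
qed



lemma orbit_step: "range (\<lambda>k. (F ^^ k) x) = insert x (range (\<lambda>k. (F ^^ k) (F x)))"
proof (rule set_eqI, rule iffI)
  fix y assume "y \<in> range (\<lambda>k. (F ^^ k) x)"
  then obtain k where "y = (F ^^ k) x" by auto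
  then show "y \<in> insert x (range (\<lambda>k. (F ^^ k) (F x)))"
    by (cases k) (auto simp: funpow_Suc_right simp del: funpow.simps)
next
  fix y assume "y \<in> insert x (range (\<lambda>k. (F ^^ k) (F x)))"
  then consider "y = x" | k where "y = (F ^^ k) (F x)" by auto
  then show "y \<in> range (\<lambda>k. (F ^^ k) x)"
  proof cases
    case 1 thus ?thesis by (metis funpow_0 rangeI)
  next
    case (2 k)
    hence "y = (F ^^ Suc k) x" by (simp add: funpow_Suc_right del: funpow.simps)
    thus ?thesis by blast
  qed
qed

lemma pp_step: "preperiodic_pt F (F x) \<longleftrightarrow> preperiodic_pt F x"
  unfolding preperiodic_pt_def by (subst (2) orbit_step) simp

lemma pp_fix: "F x = x \<Longrightarrow> preperiodic_pt F x"
proof -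
  assume h: "F x = x"
  have "(F ^^ k) x = x" for k by (induction k) (simp_all add: h)
  hence "range (\<lambda>k. (F ^^ k) x) = {x}" by auto
  thus ?thesis unfolding preperiodic_pt_def by simp
qed

lemma rf_many_preper:
  fixes p q :: "complex poly"
  assumes rf: "is_rat_fun p q" and e2: "rat_deg p q \<ge> 2"
  shows "infinite {a. preperiodic_pt (rat_map p q) (Some a)}"
proof
  assume finA: "finite {a. preperiodic_pt (rat_map p q) (Some a)}"
  define F where "F = rat_map p q"
  define e where "e = rat_deg p q"
  define S where "S = {x. preperiodic_pt F x}"
  define A where "A = {a. Some a \<in> S}"
  have e1: "rat_deg p q \<ge> 1" using e2 by simp
  have q0: "q \<noteq> 0" using rf by (simp add: is_rat_fun_def)
  have finA': "finite A" using finA by (simp add: A_def S_def F_def)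
  have "S \<subseteq> insert None (Some ` A)"
  proof
    fix x assume "x \<in> S" thus "x \<in> insert None (Some ` A)" by (cases x) (auto simp: A_def)
  qed
  hence finS: "finite S" using finA' by (meson finite_imageI finite_insert finite_subset)
  have FS: "F ` S = S"
  proof
    show "F ` S \<subseteq> S" by (auto simp: S_def pp_step)
    show "S \<subseteq> F ` S"
    proof
      fix s assume "s \<in> S"
      obtain t where "F t = s" using rf_surj[OF rf e1, of s] unfolding F_def by blast
      hence "t \<in> S" using \<open>s \<in> S\<close> pp_step[of F t] by (simp add: S_def)
      thus "s \<in> F ` S" using \<open>F t = s\<close> by blast
    qed
  qed
  have inj: "inj_on F S" using finS FS by (simp add: eq_card_imp_inj_on)
  have uniq: "t = t'" if "s \<in> S" "F t = s" "F t' = s" for s t t'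
  proof -
    have "t \<in> S" "t' \<in> S" using that pp_step[of F t] pp_step[of F t'] by (simp_all add: S_def)
    thus ?thesis using inj that by (auto dest: inj_onD)
  qed
  let ?W = "pderiv p * q - p * pderiv q"
  have W0: "?W \<noteq> 0" using W_nz[OF rf e1] .
  have Wdv: "[:-a,1:]^(e-1) dvd ?W" if "a \<in> A" for a
  proof -
    have "F (Some a) \<in> S" using that FS by (auto simp: A_def)
    hence "\<And>t. F t = F (Some a) \<Longrightarrow> t = Some a" using uniq by blast
    thus ?thesis using unique_preim_form[OF rf e1, of a "F (Some a)"] by (simp add: F_def e_def)
  qed
  have e1': "e - 1 \<ge> 1" using e2 unfolding e_def by simp
  have cntA: "(e-1) * card A \<le> degree ?W"
    by (rule count_roots_bound[OF W0 finA' Wdv e1'])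
  define Fx where "Fx = p - [:0,1:] * q"
  have rootA: "b \<in> A" and ord1: "order b Fx = 1" if "poly Fx b = 0" for b
  proof -
    have pb: "poly p b = b * poly q b" using that by (simp add: Fx_def)
    have qb: "poly q b \<noteq> 0" using rf_common_root[OF rf] pb by force
    have fxb: "F (Some b) = Some b" using qb pb by (simp add: F_def rm_Some_nz)
    thus "b \<in> A" by (simp add: A_def S_def pp_fix)
    hence "Some b \<in> S" by (simp add: A_def)
    hence u: "\<And>t. F t = Some b \<Longrightarrow> t = Some b" using uniq fxb by metis
    define k where "k = lead_coeff (p - smult b q)"
    have hf: "p - smult b q = smult k ([:-b,1:] ^ e)"
      using unique_preim_form_fix[OF rf e1] fxb u by (simp add: F_def e_def k_def)
    define R where "R = smult k ([:-b,1:] ^ (e-1)) - q"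
    obtain m where em: "e = Suc m" using e2 e_def by (metis Suc_le_D numeral_2_eq_2)
    have eqA: "[:-b,1:] * smult k ([:-b,1:] ^ (e-1)) = smult k ([:-b,1:] ^ e)"
      by (simp add: em)
    have lin: "[:-b,1:] * q = [:0,1:] * q - smult b q" by simp
    have "[:-b,1:] * R = [:-b,1:] * smult k ([:-b,1:] ^ (e-1)) - [:-b,1:] * q"
      by (simp only: R_def right_diff_distrib)
    also have "\<dots> = (p - smult b q) - ([:0,1:] * q - smult b q)"
      by (simp only: eqA hf[symmetric] lin)
    also have "\<dots> = Fx" by (simp add: Fx_def)
    finally have FxR: "Fx = [:-b,1:] * R" by simp
    have "poly R b = - poly q b" using e2 e_def by (simp add: R_def)
    hence Rb: "poly R b \<noteq> 0" using qb by simp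
    hence "R \<noteq> 0" by auto
    moreover have "[:-b,1:] \<noteq> (0::complex poly)" by simp
    ultimately have nz: "[:-b,1:] * R \<noteq> 0" by (simp only: mult_eq_0_iff) simp
    have "order b Fx = order b [:-b,1:] + order b R" unfolding FxR by (rule order_mult[OF nz])
    also have "order b R = 0" using Rb by (simp add: order_0I)
    also have "order b [:-b,1:] = 1" using order_power_n_n[of b 1] by simp
    finally show "order b Fx = 1" by simp
  qed
  have degFx: "degree Fx \<le> card A" if Fx0: "Fx \<noteq> 0"
  proof -
    have "degree Fx = (\<Sum>z|poly Fx z = 0. order z Fx)" by (rule deg_sum_order[OF Fx0])
    also have "\<dots> = (\<Sum>z|poly Fx z = 0. 1)" using ord1 by simp
    also have "\<dots> = card {z. poly Fx z = 0}" by simp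
    also have "\<dots> \<le> card A" using rootA finA' by (intro card_mono) auto
    finally show ?thesis .
  qed
  show False
  proof (cases "degree p \<le> degree q")
    case True
    hence dq: "degree q = e" by (simp add: e_def rat_deg_def)
    have dxq: "degree ([:0,1:] * q) = e + 1" using q0 dq by (simp add: degree_mult_eq)
    have "degree p \<le> e" using True dq by simp
    hence cp: "coeff p (e+1) = 0" by (intro coeff_eq_0) simp
    have "[:0,1:] * q = pCons 0 q" by simp
    hence "coeff ([:0,1:] * q) (e+1) = lead_coeff q" using dq by simp
    hence "coeff Fx (e+1) = - lead_coeff q" using cp by (simp add: Fx_def)
    hence "coeff Fx (e+1) \<noteq> 0" using q0 by simp
    hence Fx0: "Fx \<noteq> 0" and "e + 1 \<le> degree Fx" by (auto intro: le_degree)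
    hence "e + 1 \<le> card A" using degFx by simp
    moreover have "degree ?W \<le> 2 * e - 2" using W_deg[OF rf e1] by (simp add: e_def)
    moreover have "(e-1) * (e+1) \<le> (e-1) * card A" using \<open>e + 1 \<le> card A\<close> by (rule mult_le_mono2)
    moreover have "2 * e - 2 = (e-1) * 2" by (simp add: algebra_simps)
    ultimately have "(e-1) * (e+1) \<le> (e-1) * 2" using cntA by linarith
    moreover have "e - 1 > 0" using e2 e_def by simp
    ultimately have "e + 1 \<le> 2" using mult_le_cancel1 by blast
    thus False using e2 e_def by simp
  next
    case False
    hence dp: "degree p = e" by (simp add: e_def rat_deg_def)
    have Finf: "F None = None" using False by (simp add: F_def rat_map_def)
    hence "None \<in> S" by (simp add: S_def pp_fix)
    have "\<not> (\<exists>b. poly q b = 0)"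
    proof
      assume "\<exists>b. poly q b = 0"
      then obtain b where "poly q b = 0" by blast
      hence "F (Some b) = None" by (simp add: F_def rm_Some_z)
      thus False using uniq[OF \<open>None \<in> S\<close> _ Finf] by blast
    qed
    hence dq0: "degree q = 0"
    proof -
      assume nr: "\<not> (\<exists>b. poly q b = 0)"
      show "degree q = 0"
      proof (rule ccontr)
        assume "degree q \<noteq> 0"
        hence "degree q \<ge> 1" by simp
        thus False using complex_root_exists nr by blast
      qed
    qed
    have "degree ?W \<le> degree p + degree q - 1" by (rule deg_wr)
    hence dW: "degree ?W \<le> e - 1" using dp dq0 by simp
    have "(e-1) * card A \<le> (e-1) * 1" using le_trans[OF cntA dW] by (simp only: mult_1_right)
    moreover have "e - 1 > 0" using e2 e_def by simp
    ultimately have cA: "card A \<le> 1" using mult_le_cancel1 by blast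
    have "degree ([:0,1:] * q) \<le> 1" using dq0 degree_mult_le[of "[:0,1:]" q] by simp
    hence "coeff ([:0,1:] * q) e = 0" using e2 e_def by (intro coeff_eq_0) simp
    hence "coeff Fx e = lead_coeff p" using dp by (simp add: Fx_def)
    moreover have "degree p \<noteq> 0" using dp e2 e_def by simp
    hence "p \<noteq> 0" by auto
    hence "lead_coeff p \<noteq> 0" by simp
    ultimately have "coeff Fx e \<noteq> 0" by argo
    hence "Fx \<noteq> 0" and "e \<le> degree Fx" by (auto intro: le_degree)
    thus False using degFx cA e2 e_def by simp
  qed
qed



lemma cz_SS: "(Some a, Some b) \<in> curve_zero P \<longleftrightarrow> poly (map_poly (\<lambda>c. poly c a) P) b = 0"
  by (simp add: curve_zero_def)
lemma cz_NS: "(None, Some b) \<in> curve_zero P \<longleftrightarrow> poly (map_poly (\<lambda>c. coeff c (degx P)) P) b = 0"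
  by (simp add: curve_zero_def)
lemma cz_SN: "(Some a, None) \<in> curve_zero P \<longleftrightarrow> poly (lead_coeff P) a = 0"
  by (simp add: curve_zero_def)

lemma coeff_Pa: "coeff (map_poly (\<lambda>c. poly c a) P) j = poly (coeff P j) a"
  by (simp add: coeff_map_poly)

lemma curve_deg_pos:
  fixes P :: "complex poly poly"
  assumes irr: "irreducible P" and dom: "dominant_fst (curve_zero P)"
  shows "degree P \<ge> 1"
proof (rule ccontr)
  assume "\<not> degree P \<ge> 1"
  hence "degree P = 0" by simp
  then obtain c where Pc: "P = [:c:]" by (rule degree_eq_zeroE)
  have "P \<noteq> 0" using irr by auto
  hence c0: "c \<noteq> 0" using Pc by simp
  have "fst ` curve_zero P \<subseteq> insert None (Some ` {a. poly c a = 0})"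
  proof
    fix u assume "u \<in> fst ` curve_zero P"
    then obtain v where uv: "(u, v) \<in> curve_zero P" by force
    show "u \<in> insert None (Some ` {a. poly c a = 0})"
    proof (cases u)
      case (Some a)
      have "poly c a = 0"
      proof (cases v)
        case None thus ?thesis using uv Some Pc cz_SN[of a P] by simp
      next
        case (Some b)
        have mp: "map_poly (\<lambda>c. poly c a) P = [:poly c a:]"
          by (rule poly_eqI) (simp add: Pc coeff_map_poly coeff_pCons split: nat.split)
        show ?thesis using uv \<open>u = Some a\<close> Some cz_SS[of a b P] mp by simp
      qed
      thus ?thesis using Some by blast
    qed simp
  qed
  moreover have "finite (insert None (Some ` {a. poly c a = 0}))"
    using poly_roots_finite[OF c0] by simp
  ultimately show False using dom by (auto simp: dominant_fst_def intro: finite_subset)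
qed

lemma curve_Pa_nz:
  fixes P :: "complex poly poly"
  assumes irr: "irreducible P" and dp: "degree P \<ge> 1"
  shows "map_poly (\<lambda>c. poly c a) P \<noteq> 0"
proof
  assume Z: "map_poly (\<lambda>c. poly c a) P = 0"
  define g :: "complex poly" where "g = [:-a,1:]"
  have dv: "g dvd coeff P j" for j
    using coeff_Pa[of a P j] Z by (simp add: g_def dvd_iff_poly_eq_0)
  define Q where "Q = map_poly (\<lambda>c. c div g) P"
  have "coeff (smult g Q) j = coeff P j" for j
    using dv[of j] by (simp add: Q_def coeff_map_poly)
  hence PQ: "P = [:g:] * Q" by (simp add: poly_eq_iff)
  have "\<not> is_unit [:g:]"
  proof
    assume "is_unit [:g:]"
    hence "is_unit g" by (simp add: is_unit_const_poly_iff)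
    moreover have "g \<noteq> 0" by (simp add: g_def)
    ultimately have "degree g = 0" by (simp add: is_unit_iff_degree)
    thus False by (simp add: g_def)
  qed
  moreover have "\<not> is_unit Q"
  proof
    assume "is_unit Q"
    then obtain c where "Q = [:c:]" using is_unit_poly_iff by blast
    hence "degree Q = 0" by simp
    moreover have "degree P = degree Q" using PQ by (simp add: g_def)
    ultimately show False using dp by simp
  qed
  ultimately show False using irreducibleD[OF irr PQ] by blast
qed

lemma curve_fiber_nonempty:
  fixes P :: "complex poly poly"
  assumes irr: "irreducible P" and dp: "degree P \<ge> 1"
  shows "\<exists>v. (Some a, v) \<in> curve_zero P"
proof (cases "degree (map_poly (\<lambda>c. poly c a) P) \<ge> 1")
  case True
  then obtain b where "poly (map_poly (\<lambda>c. poly c a) P) b = 0" using complex_root_exists by blast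
  thus ?thesis using cz_SS by blast
next
  case False
  hence "degree (map_poly (\<lambda>c. poly c a) P) < degree P" using dp by simp
  hence "coeff (map_poly (\<lambda>c. poly c a) P) (degree P) = 0" by (simp add: coeff_eq_0)
  hence "poly (lead_coeff P) a = 0" by (simp add: coeff_Pa)
  thus ?thesis using cz_SN by blast
qed

lemma curve_fiber_finite:
  fixes P :: "complex poly poly"
  assumes irr: "irreducible P" and dp: "degree P \<ge> 1"
  shows "finite {v. (u, v) \<in> curve_zero P}"
proof -
  have P0: "P \<noteq> 0" using dp by auto
  obtain R where R0: "R \<noteq> 0" and sub: "{v. (u, v) \<in> curve_zero P} \<subseteq> insert None (Some ` {b. poly R b = 0})"
  proof (cases u)
    case (Some a)
    show ?thesis
    proof (rule that[OF curve_Pa_nz[OF irr dp, of a]])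
      show "{v. (u, v) \<in> curve_zero P} \<subseteq> insert None (Some ` {b. poly (map_poly (\<lambda>c. poly c a) P) b = 0})"
      proof
        fix v assume "v \<in> {v. (u, v) \<in> curve_zero P}"
        thus "v \<in> insert None (Some ` {b. poly (map_poly (\<lambda>c. poly c a) P) b = 0})"
          using Some cz_SS[of a _ P] by (cases v) auto
      qed
    qed
  next
    case None
    let ?Q = "map_poly (\<lambda>c. coeff c (degx P)) P"
    have cQ: "coeff ?Q j = coeff (coeff P j) (degx P)" for j by (simp add: coeff_map_poly)
    have Q0: "?Q \<noteq> 0"
    proof -
      have fin: "finite ((\<lambda>j. degree (coeff P j)) ` {..degree P})" by simp
      have "degx P \<in> (\<lambda>j. degree (coeff P j)) ` {..degree P}"
        unfolding degx_def by (rule Max_in) auto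
      then obtain j where j: "j \<le> degree P" "degree (coeff P j) = degx P" by auto
      show ?thesis
      proof (cases "coeff P j = 0")
        case False
        hence "coeff (coeff P j) (degree (coeff P j)) \<noteq> 0" by simp
        hence "coeff ?Q j \<noteq> 0" using j(2) cQ[of j] by simp
        thus ?thesis by auto
      next
        case True
        hence dx0: "degx P = 0" using j by simp
        have "degree (coeff P (degree P)) \<le> degx P"
          unfolding degx_def by (rule Max_ge) auto
        hence "degree (lead_coeff P) = 0" using dx0 by simp
        moreover have "lead_coeff P \<noteq> 0" using P0 by simp
        ultimately have "coeff (lead_coeff P) 0 \<noteq> 0" by (metis leading_coeff_0_iff)
        hence "coeff ?Q (degree P) \<noteq> 0" using cQ dx0 by simp
        thus ?thesis by auto
      qed
    qed
    show ?thesis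
    proof (rule that[OF Q0])
      show "{v. (u, v) \<in> curve_zero P} \<subseteq> insert None (Some ` {b. poly ?Q b = 0})"
      proof
        fix v assume "v \<in> {v. (u, v) \<in> curve_zero P}"
        thus "v \<in> insert None (Some ` {b. poly ?Q b = 0})"
          using None cz_NS[of _ P] by (cases v) auto
      qed
    qed
  qed
  thus ?thesis using poly_roots_finite[OF R0] by (meson finite_imageI finite_insert finite_subset)
qed



lemma funpow_map_prod:
  fixes F :: "'a \<Rightarrow> 'a" and G :: "'b \<Rightarrow> 'b"
  shows "(map_prod F G ^^ k) = map_prod (F ^^ k) (G ^^ k)"
proof (induction k)
  case 0 show ?case by (simp add: fun_eq_iff)
next
  case (Suc k)
  show ?case
  proof
    fix z :: "'a \<times> 'b"
    show "(map_prod F G ^^ Suc k) z = map_prod (F ^^ Suc k) (G ^^ Suc k) z"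
      using Suc by (cases z) simp
  qed
qed

lemma iter_preim_finite:
  fixes F :: "'a \<Rightarrow> 'a"
  assumes "\<And>x. finite {t. F t = x}" shows "finite {t. (F ^^ k) t = x}"
proof (induction k arbitrary: x)
  case 0 show ?case by simp
next
  case (Suc k)
  have "{t. (F ^^ Suc k) t = x} = (\<Union>y\<in>{y. F y = x}. {t. (F ^^ k) t = y})" by auto
  thus ?case using assms Suc by simp
qed

lemma sets_periodic:
  fixes H :: "'a \<Rightarrow> 'a"
  assumes "m < n" "(H ^^ m) ` C = (H ^^ n) ` C"
  shows "\<exists>j<n. (H ^^ k) ` C = (H ^^ j) ` C"
proof (induction k rule: less_induct)
  case (less k)
  show ?case
  proof (cases "k < n")
    case True thus ?thesis by blast
  next
    case False
    have "(H ^^ k) ` C = (H ^^ (k - n)) ` ((H ^^ n) ` C)"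
      using False by (metis funpow_add image_comp le_add_diff_inverse2 not_less)
    also have "\<dots> = (H ^^ (k - n)) ` ((H ^^ m) ` C)" using assms(2) by simp
    also have "\<dots> = (H ^^ (k - n + m)) ` C" by (simp add: funpow_add image_comp)
    finally show ?thesis using less[of "k - n + m"] assms(1) False by auto
  qed
qed

theorem lemma6p1:
  fixes f1 f2 g1 g2 :: "complex poly" and d :: nat and C :: "(P1 \<times> P1) set"
  assumes "is_rat_fun f1 f2" and "is_rat_fun g1 g2"
    and "rat_deg f1 f2 = d" and "rat_deg g1 g2 = d" and "d > 1"
    and "is_curve C" and "dominant_fst C" and "dominant_snd C"
    and "preperiodic_set (map_prod (rat_map f1 f2) (rat_map g1 g2)) C"
  shows "infinite {z \<in> C. preperiodic_pt (map_prod (rat_map f1 f2) (rat_map g1 g2)) z}"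
proof
  assume finT: "finite {z \<in> C. preperiodic_pt (map_prod (rat_map f1 f2) (rat_map g1 g2)) z}"
  define F where "F = rat_map f1 f2"
  define G where "G = rat_map g1 g2"
  define H where "H = map_prod F G"
  obtain P where irr: "irreducible P" and CP: "C = curve_zero P" using assms(6) by (auto simp: is_curve_def)
  have dp: "degree P \<ge> 1" using curve_deg_pos irr assms(7) CP by blast
  have fibC: "finite {v. (u, v) \<in> C}" for u using curve_fiber_finite[OF irr dp] CP by simp
  have neC: "\<exists>v. (Some a, v) \<in> C" for a using curve_fiber_nonempty[OF irr dp] CP by simp
  have Fpre: "finite {t. (F ^^ k) t = x}" for k x
    by (rule iter_preim_finite, unfold F_def, rule rf_preim_finite) (use assms(1,3,5) in auto)
  have finCT: "finite (C \<inter> {z. fst z \<in> T})" if "finite T" for T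
  proof -
    have "C \<inter> {z. fst z \<in> T} \<subseteq> (SIGMA u:T. {v. (u, v) \<in> C})" by auto
    thus ?thesis using that fibC by (meson finite_SigmaI finite_subset)
  qed
  have fibH: "finite {v. (x, v) \<in> (H ^^ j) ` C}" for j x
  proof -
    have "{v. (x, v) \<in> (H ^^ j) ` C} \<subseteq> snd ` (H ^^ j) ` (C \<inter> {z. fst z \<in> {t. (F ^^ j) t = x}})"
    proof
      fix v assume "v \<in> {v. (x, v) \<in> (H ^^ j) ` C}"
      then obtain z where z: "z \<in> C" "(H ^^ j) z = (x, v)" by auto
      hence "(F ^^ j) (fst z) = x" by (cases z) (simp add: H_def funpow_map_prod)
      thus "v \<in> snd ` (H ^^ j) ` (C \<inter> {z. fst z \<in> {t. (F ^^ j) t = x}})" using z by force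
    qed
    thus ?thesis using finCT[OF Fpre] by (meson finite_imageI finite_subset)
  qed
  obtain m n where mn: "m < n" "(H ^^ m) ` C = (H ^^ n) ` C"
    using assms(9) by (auto simp: preperiodic_set_def H_def F_def G_def)
  have ppz: "preperiodic_pt H (Some a, v)" if zC: "(Some a, v) \<in> C" and pa: "preperiodic_pt F (Some a)" for a v
  proof -
    define Orb where "Orb = range (\<lambda>k. (F ^^ k) (Some a))"
    have finO: "finite Orb" using pa by (simp add: Orb_def preperiodic_pt_def)
    have "range (\<lambda>k. (H ^^ k) (Some a, v)) \<subseteq> (SIGMA x:Orb. \<Union>j<n. {w. (x, w) \<in> (H ^^ j) ` C})"
    proof
      fix y assume "y \<in> range (\<lambda>k. (H ^^ k) (Some a, v))"
      then obtain k where y: "y = (H ^^ k) (Some a, v)" by auto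
      obtain j where j: "j < n" "(H ^^ k) ` C = (H ^^ j) ` C" using sets_periodic[OF mn] by blast
      have "y \<in> (H ^^ j) ` C" using y zC j by blast
      moreover have "fst y \<in> Orb" using y by (simp add: H_def funpow_map_prod Orb_def)
      ultimately show "y \<in> (SIGMA x:Orb. \<Union>j<n. {w. (x, w) \<in> (H ^^ j) ` C})"
        using j by (cases y) auto
    qed
    moreover have "finite (SIGMA x:Orb. \<Union>j<n. {w. (x, w) \<in> (H ^^ j) ` C})"
      using finO fibH by (intro finite_SigmaI) auto
    ultimately show ?thesis unfolding preperiodic_pt_def by (rule finite_subset)
  qed
  define PA where "PA = {a. preperiodic_pt F (Some a)}"
  have infPA: "infinite PA" unfolding PA_def F_def
    by (rule rf_many_preper) (use assms(1,3,5) in auto)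
  define \<sigma> where "\<sigma> a = (SOME v. (Some a, v) \<in> C)" for a
  have \<sigma>C: "(Some a, \<sigma> a) \<in> C" for a unfolding \<sigma>_def by (rule someI_ex[OF neC])
  have inj: "inj_on (\<lambda>a. (Some a, \<sigma> a)) PA" by (rule inj_onI) simp
  have "(\<lambda>a. (Some a, \<sigma> a)) ` PA \<subseteq> {z \<in> C. preperiodic_pt H z}"
    using \<sigma>C ppz by (auto simp: PA_def)
  hence "finite ((\<lambda>a. (Some a, \<sigma> a)) ` PA)"
    using finT by (simp add: H_def F_def G_def) (meson finite_subset)
  thus False using infPA inj finite_imageD by blast
qed


end
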